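(* Let $\mathbb{K}$ be a field with $\mathbb{Q}\subseteq\mathbb{K}\subseteq\mathbb{C}$, and let $m,n$ be positive integers with $1\le m<n$. Suppose the complex numbers $x_1,\dots,x_n$ and $y_1,\dots,y_m$ satisfy $$f_j(x_1,\dots,x_n,y_1,\dots,y_m)=0\qquad(j=1,\dots,m)$$ for some polynomials $f_j(X_1,\dots,X_n,Y_1,\dots,Y_m)\in\mathbb{K}[X_1,\dots,X_n,Y_1,\dots,Y_m]$. If $x_1,\dots,x_n$ are algebraically independent over $\mathbb{K}$ and $$\det\Big(\frac{\partial f_j}{\partial X_i}(x_1,\dots,x_n,y_1,\dots,y_m)\Big)_{1\le i,j\le m}\neq0,$$ then $y_1,\dots,y_m$ are algebraically independent over the field $\mathbb{K}(x_{m+1},\dots,x_n)$.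
   Context: The determinant is of the $m\times m$ matrix with rows indexed by $j$ and columns indexed by $i$, both ranging over $1,\dots,m$ (only the partial derivatives with respect to $X_1,\dots,X_m$ are used). *)

theory Defs
  imports Complex_Main "HOL-Library.Poly_Mapping" "Jordan_Normal_Form.Determinant"
begin

type_synonym 'v mpoly_c = "('v \<Rightarrow>\<^sub>0 nat) \<Rightarrow>\<^sub>0 complex"

definition mpoly_eval :: "'v mpoly_c \<Rightarrow> ('v \<Rightarrow> complex) \<Rightarrow> complex" where
  "mpoly_eval p a =
     (\<Sum>mo\<in>Poly_Mapping.keys p. Poly_Mapping.lookup p mo *
        (\<Prod>v\<in>Poly_Mapping.keys mo. a v ^ Poly_Mapping.lookup mo v))"

definition mpoly_pderiv :: "'v \<Rightarrow> 'v mpoly_c \<Rightarrow> 'v mpoly_c" where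
  "mpoly_pderiv v p = Abs_poly_mapping (\<lambda>mo.
     of_nat (Poly_Mapping.lookup mo v + 1) *
     Poly_Mapping.lookup p (mo + Poly_Mapping.single v 1))"

definition coeffs_in :: "complex set \<Rightarrow> 'v mpoly_c \<Rightarrow> bool" where
  "coeffs_in L p \<longleftrightarrow> (\<forall>mo. Poly_Mapping.lookup p mo \<in> L)"

definition vars_in :: "'v set \<Rightarrow> 'v mpoly_c \<Rightarrow> bool" where
  "vars_in V p \<longleftrightarrow> (\<forall>mo\<in>Poly_Mapping.keys p. Poly_Mapping.keys mo \<subseteq> V)"

definition is_subfield :: "complex set \<Rightarrow> bool" where
  "is_subfield L \<longleftrightarrow> 0 \<in> L \<and> 1 \<in> L \<and>
     (\<forall>a\<in>L. \<forall>b\<in>L. a + b \<in> L \<and> a - b \<in> L \<and> a * b \<in> L) \<and>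
     (\<forall>a\<in>L. a \<noteq> 0 \<longrightarrow> inverse a \<in> L)"

definition field_adjoin :: "complex set \<Rightarrow> complex set \<Rightarrow> complex set" where
  "field_adjoin L S = \<Inter>{F. is_subfield F \<and> L \<union> S \<subseteq> F}"

definition alg_indep :: "complex set \<Rightarrow> nat \<Rightarrow> (nat \<Rightarrow> complex) \<Rightarrow> bool" where
  "alg_indep L k a \<longleftrightarrow>
     (\<forall>p :: nat mpoly_c. coeffs_in L p \<and> vars_in {..<k} p \<and> mpoly_eval p a = 0 \<longrightarrow> p = 0)"

end

theory Submission
  imports Defs "HOL-Computational_Algebra.Polynomial"
begin

lemma sf_0: "is_subfield F \<Longrightarrow> 0 \<in> F" by (simp add: is_subfield_def)
lemma sf_1: "is_subfield F \<Longrightarrow> 1 \<in> F" by (simp add: is_subfield_def)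
lemma sf_add: "is_subfield F \<Longrightarrow> a \<in> F \<Longrightarrow> b \<in> F \<Longrightarrow> a + b \<in> F" by (simp add: is_subfield_def)
lemma sf_diff: "is_subfield F \<Longrightarrow> a \<in> F \<Longrightarrow> b \<in> F \<Longrightarrow> a - b \<in> F" by (simp add: is_subfield_def)
lemma sf_mult: "is_subfield F \<Longrightarrow> a \<in> F \<Longrightarrow> b \<in> F \<Longrightarrow> a * b \<in> F" by (simp add: is_subfield_def)
lemma sf_inv: "is_subfield F \<Longrightarrow> a \<in> F \<Longrightarrow> inverse a \<in> F"
  using sf_0[of F] by (cases "a = 0") (auto simp: is_subfield_def)
lemma sf_divide: "is_subfield F \<Longrightarrow> a \<in> F \<Longrightarrow> b \<in> F \<Longrightarrow> a / b \<in> F"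
  by (simp add: divide_inverse sf_mult sf_inv)
lemma sf_uminus: "is_subfield F \<Longrightarrow> a \<in> F \<Longrightarrow> - a \<in> F"
  using sf_diff[of F 0 a] sf_0[of F] by simp
lemma sf_sum: "is_subfield F \<Longrightarrow> (\<And>i. i \<in> A \<Longrightarrow> f i \<in> F) \<Longrightarrow> sum f A \<in> F"
  by (induction A rule: infinite_finite_induct) (auto simp: sf_0 sf_add)
lemma sf_prod: "is_subfield F \<Longrightarrow> (\<And>i. i \<in> A \<Longrightarrow> f i \<in> F) \<Longrightarrow> prod f A \<in> F"
  by (induction A rule: infinite_finite_induct) (auto simp: sf_1 sf_mult)
lemma sf_power: "is_subfield F \<Longrightarrow> a \<in> F \<Longrightarrow> a ^ n \<in> F"
  by (induction n) (auto simp: sf_1 sf_mult)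
lemma sf_of_nat: "is_subfield F \<Longrightarrow> of_nat n \<in> F"
  by (induction n) (auto simp: sf_0 sf_1 sf_add)

definition is_der :: "complex set \<Rightarrow> (complex \<Rightarrow> complex) \<Rightarrow> bool" where
  "is_der F D \<longleftrightarrow> (\<forall>a\<in>F. \<forall>b\<in>F. D (a + b) = D a + D b \<and> D (a * b) = a * D b + b * D a)"

lemma der_add: "is_der F D \<Longrightarrow> a \<in> F \<Longrightarrow> b \<in> F \<Longrightarrow> D (a + b) = D a + D b"
  by (simp add: is_der_def)
lemma der_mult: "is_der F D \<Longrightarrow> a \<in> F \<Longrightarrow> b \<in> F \<Longrightarrow> D (a * b) = a * D b + b * D a"
  by (simp add: is_der_def)
lemma der_0: "is_subfield F \<Longrightarrow> is_der F D \<Longrightarrow> D 0 = 0"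
  using der_add[of F D 0 0] sf_0[of F] by simp
lemma der_1: "is_subfield F \<Longrightarrow> is_der F D \<Longrightarrow> D 1 = 0"
  using der_mult[of F D 1 1] sf_1[of F] by simp
lemma der_diff: "is_subfield F \<Longrightarrow> is_der F D \<Longrightarrow> a \<in> F \<Longrightarrow> b \<in> F \<Longrightarrow> D (a - b) = D a - D b"
  using der_add[of F D "a - b" b] sf_diff[of F a b] by simp
lemma der_sum: "is_subfield F \<Longrightarrow> is_der F D \<Longrightarrow> (\<And>i. i \<in> A \<Longrightarrow> f i \<in> F) \<Longrightarrow>
   D (sum f A) = (\<Sum>i\<in>A. D (f i))"
proof (induction A rule: infinite_finite_induct)
  case (insert x A)
  then show ?case by (simp add: der_add sf_sum)
qed (auto simp: der_0)
lemma der_prod: "finite A \<Longrightarrow> is_subfield F \<Longrightarrow> is_der F D \<Longrightarrow> (\<And>i. i \<in> A \<Longrightarrow> f i \<in> F) \<Longrightarrow>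
   D (prod f A) = (\<Sum>i\<in>A. D (f i) * prod f (A - {i}))"
proof (induction A rule: finite_induct)
  case (insert x A)
  have "D (prod f (insert x A)) = f x * D (prod f A) + prod f A * D (f x)"
    using insert by (simp add: der_mult sf_prod)
  also have "\<dots> = (\<Sum>i\<in>insert x A. D (f i) * prod f (insert x A - {i}))"
  proof -
    have "(\<Sum>i\<in>A. D (f i) * prod f (insert x A - {i})) = (\<Sum>i\<in>A. f x * (D (f i) * prod f (A - {i})))"
    proof (intro sum.cong refl)
      fix i assume "i \<in> A"
      then have "insert x A - {i} = insert x (A - {i})" "x \<notin> A - {i}" using insert by auto
      then show "D (f i) * prod f (insert x A - {i}) = f x * (D (f i) * prod f (A - {i}))"
        using insert by (simp add: mult_ac)
    qed
    moreover have "insert x A - {x} = A" using insert by auto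
    ultimately show ?thesis using insert by (simp add: sum_distrib_left mult_ac)
  qed
  finally show ?case .
qed (auto simp: der_1)
lemma der_power: "is_subfield F \<Longrightarrow> is_der F D \<Longrightarrow> a \<in> F \<Longrightarrow> D (a ^ Suc n) = of_nat (Suc n) * a ^ n * D a"
proof (induction n)
  case 0 then show ?case by simp
next
  case (Suc n)
  have "D (a ^ Suc (Suc n)) = D (a * a ^ Suc n)" by simp
  also have "\<dots> = a * D (a ^ Suc n) + a ^ Suc n * D a"
    using Suc.prems by (auto intro!: der_mult sf_power simp del: power_Suc)
  also have "\<dots> = of_nat (Suc (Suc n)) * a ^ Suc n * D a"
    unfolding Suc.IH[OF Suc.prems] by (simp add: algebra_simps)
  finally show ?case .
qed

definition inF :: "complex set \<Rightarrow> complex poly \<Rightarrow> bool" where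
  "inF F p \<longleftrightarrow> (\<forall>i. coeff p i \<in> F)"

lemma inF_0: "is_subfield F \<Longrightarrow> inF F 0" by (simp add: inF_def sf_0)
lemma inF_const: "is_subfield F \<Longrightarrow> c \<in> F \<Longrightarrow> inF F [:c:]"
  by (auto simp: inF_def coeff_pCons sf_0 split: nat.split)
lemma inF_X: "is_subfield F \<Longrightarrow> inF F [:0, 1:]"
  by (auto simp: inF_def coeff_pCons sf_0 sf_1 split: nat.split)
lemma inF_add: "is_subfield F \<Longrightarrow> inF F p \<Longrightarrow> inF F q \<Longrightarrow> inF F (p + q)"
  by (simp add: inF_def sf_add)
lemma inF_diff: "is_subfield F \<Longrightarrow> inF F p \<Longrightarrow> inF F q \<Longrightarrow> inF F (p - q)"
  by (simp add: inF_def sf_diff)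
lemma inF_mult: "is_subfield F \<Longrightarrow> inF F p \<Longrightarrow> inF F q \<Longrightarrow> inF F (p * q)"
  by (simp add: inF_def coeff_mult sf_sum sf_mult)
lemma inF_smult: "is_subfield F \<Longrightarrow> c \<in> F \<Longrightarrow> inF F p \<Longrightarrow> inF F (smult c p)"
  by (simp add: inF_def sf_mult)
lemma inF_monom: "is_subfield F \<Longrightarrow> c \<in> F \<Longrightarrow> inF F (monom c d)"
  by (simp add: inF_def coeff_monom sf_0)
lemma inF_pderiv: "is_subfield F \<Longrightarrow> inF F p \<Longrightarrow> inF F (pderiv p)"
  by (simp add: inF_def coeff_pderiv sf_mult sf_of_nat sf_add sf_1)
lemma poly_inF: "is_subfield F \<Longrightarrow> inF F p \<Longrightarrow> a \<in> F \<Longrightarrow> poly p a \<in> F"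
  by (simp add: poly_altdef inF_def sf_sum sf_mult sf_power)

definition Dp :: "(complex \<Rightarrow> complex) \<Rightarrow> complex \<Rightarrow> complex \<Rightarrow> complex poly \<Rightarrow> complex" where
  "Dp D \<alpha> \<beta> p = poly (map_poly D p) \<alpha> + poly (pderiv p) \<alpha> * \<beta>"

lemma coeff_map_D: "is_subfield F \<Longrightarrow> is_der F D \<Longrightarrow> coeff (map_poly D p) i = D (coeff p i)"
  by (simp add: coeff_map_poly der_0)

lemma map_D_add: "is_subfield F \<Longrightarrow> is_der F D \<Longrightarrow> inF F p \<Longrightarrow> inF F q \<Longrightarrow>
  map_poly D (p + q) = map_poly D p + map_poly D q"
  by (rule poly_eqI) (simp add: coeff_map_D inF_def der_add)
lemma map_D_diff: "is_subfield F \<Longrightarrow> is_der F D \<Longrightarrow> inF F p \<Longrightarrow> inF F q \<Longrightarrow>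
  map_poly D (p - q) = map_poly D p - map_poly D q"
  by (rule poly_eqI) (simp add: coeff_map_D inF_def der_diff)
lemma map_D_mult: "is_subfield F \<Longrightarrow> is_der F D \<Longrightarrow> inF F p \<Longrightarrow> inF F q \<Longrightarrow>
  map_poly D (p * q) = map_poly D p * q + p * map_poly D q"
proof (rule poly_eqI)
  fix n
  assume F: "is_subfield F" "is_der F D" "inF F p" "inF F q"
  have "coeff (map_poly D (p * q)) n = D (\<Sum>i\<le>n. coeff p i * coeff q (n - i))"
    using F by (simp add: coeff_map_D coeff_mult)
  also have "\<dots> = (\<Sum>i\<le>n. D (coeff p i * coeff q (n - i)))"
    using F by (intro der_sum) (auto simp: inF_def sf_mult)
  also have "\<dots> = (\<Sum>i\<le>n. D (coeff p i) * coeff q (n - i) + coeff p i * D (coeff q (n - i)))"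
    using F by (intro sum.cong) (auto simp: inF_def der_mult mult.commute)
  also have "\<dots> = coeff (map_poly D p * q + p * map_poly D q) n"
    using F by (simp add: coeff_mult coeff_map_D sum.distrib)
  finally show "coeff (map_poly D (p * q)) n = coeff (map_poly D p * q + p * map_poly D q) n" .
qed

lemma Dp_0: "is_subfield F \<Longrightarrow> is_der F D \<Longrightarrow> Dp D \<alpha> \<beta> 0 = 0"
  by (simp add: Dp_def)
lemma Dp_add: "is_subfield F \<Longrightarrow> is_der F D \<Longrightarrow> inF F p \<Longrightarrow> inF F q \<Longrightarrow>
  Dp D \<alpha> \<beta> (p + q) = Dp D \<alpha> \<beta> p + Dp D \<alpha> \<beta> q"
  by (simp add: Dp_def map_D_add pderiv_add algebra_simps)
lemma Dp_diff: "is_subfield F \<Longrightarrow> is_der F D \<Longrightarrow> inF F p \<Longrightarrow> inF F q \<Longrightarrow>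
  Dp D \<alpha> \<beta> (p - q) = Dp D \<alpha> \<beta> p - Dp D \<alpha> \<beta> q"
  by (simp add: Dp_def map_D_diff pderiv_diff algebra_simps)
lemma Dp_mult: "is_subfield F \<Longrightarrow> is_der F D \<Longrightarrow> inF F p \<Longrightarrow> inF F q \<Longrightarrow>
  Dp D \<alpha> \<beta> (p * q) = poly q \<alpha> * Dp D \<alpha> \<beta> p + poly p \<alpha> * Dp D \<alpha> \<beta> q"
  by (simp add: Dp_def map_D_mult pderiv_mult algebra_simps)
lemma Dp_const: "is_subfield F \<Longrightarrow> is_der F D \<Longrightarrow> Dp D \<alpha> \<beta> [:c:] = D c"
  by (simp add: Dp_def der_0 map_poly_pCons)
lemma Dp_X: "is_subfield F \<Longrightarrow> is_der F D \<Longrightarrow> Dp D \<alpha> \<beta> [:0, 1:] = \<beta>"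
  by (simp add: Dp_def der_0 der_1 pderiv_pCons map_poly_pCons)

definition ext :: "complex set \<Rightarrow> complex \<Rightarrow> complex set" where
  "ext F \<alpha> = {poly p \<alpha> / poly q \<alpha> | p q. inF F p \<and> inF F q \<and> poly q \<alpha> \<noteq> 0}"

lemma extI: "inF F p \<Longrightarrow> inF F q \<Longrightarrow> poly q \<alpha> \<noteq> 0 \<Longrightarrow> z = poly p \<alpha> / poly q \<alpha> \<Longrightarrow> z \<in> ext F \<alpha>"
  unfolding ext_def by blast

lemma ext_sub: "is_subfield F \<Longrightarrow> F \<subseteq> ext F \<alpha>"
proof
  fix c assume "is_subfield F" "c \<in> F"
  then show "c \<in> ext F \<alpha>"
    by (intro extI[of F "[:c:]" "[:1:]"]) (auto simp: inF_const sf_1)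
qed

lemma ext_alpha: "is_subfield F \<Longrightarrow> \<alpha> \<in> ext F \<alpha>"
  by (intro extI[of F "[:0,1:]" "[:1:]"]) (auto simp: inF_const inF_X sf_1)

lemma ext_subfield: assumes F: "is_subfield F" shows "is_subfield (ext F \<alpha>)"
proof -
  have c1: "inF F [:1:]" by (simp add: inF_const sf_1 F)
  have 0: "0 \<in> ext F \<alpha>" using ext_sub[OF F] sf_0[OF F] by blast
  have 1: "1 \<in> ext F \<alpha>" using ext_sub[OF F] sf_1[OF F] by blast
  { fix a b assume "a \<in> ext F \<alpha>" "b \<in> ext F \<alpha>"
    then obtain p q r s where a: "inF F p" "inF F q" "poly q \<alpha> \<noteq> 0" "a = poly p \<alpha> / poly q \<alpha>"
      and b: "inF F r" "inF F s" "poly s \<alpha> \<noteq> 0" "b = poly r \<alpha> / poly s \<alpha>"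
      unfolding ext_def by blast
    have "a + b \<in> ext F \<alpha>"
      unfolding a(4) b(4) by (rule extI[of F "p * s + r * q" "q * s"]) (use a(1-3) b(1-3) F in \<open>simp_all add: inF_add inF_mult add_frac_eq\<close>)
    moreover have "a - b \<in> ext F \<alpha>"
      unfolding a(4) b(4) by (rule extI[of F "p * s - r * q" "q * s"]) (use a(1-3) b(1-3) F in \<open>simp_all add: inF_diff inF_mult diff_frac_eq\<close>)
    moreover have "a * b \<in> ext F \<alpha>"
      unfolding a(4) b(4) by (rule extI[of F "p * r" "q * s"]) (use a(1-3) b(1-3) F in \<open>auto simp: inF_mult field_simps\<close>)
    ultimately have "a + b \<in> ext F \<alpha> \<and> a - b \<in> ext F \<alpha> \<and> a * b \<in> ext F \<alpha>" by blast }
  moreover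
  { fix a assume "a \<in> ext F \<alpha>" "a \<noteq> 0"
    then obtain p q where a: "inF F p" "inF F q" "poly q \<alpha> \<noteq> 0" "a = poly p \<alpha> / poly q \<alpha>"
      unfolding ext_def by blast
    have "inverse a \<in> ext F \<alpha>"
      by (rule extI[of F q p]) (use a \<open>a \<noteq> 0\<close> in auto) }
  ultimately show ?thesis using 0 1 unfolding is_subfield_def by blast
qed

definition kern :: "complex set \<Rightarrow> (complex \<Rightarrow> complex) \<Rightarrow> complex \<Rightarrow> complex \<Rightarrow> bool" where
  "kern F D \<alpha> \<beta> \<longleftrightarrow> (\<forall>p. inF F p \<and> poly p \<alpha> = 0 \<longrightarrow> Dp D \<alpha> \<beta> p = 0)"

definition dq :: "(complex \<Rightarrow> complex) \<Rightarrow> complex \<Rightarrow> complex \<Rightarrow> complex poly \<Rightarrow> complex poly \<Rightarrow> complex" where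
  "dq D \<alpha> \<beta> p q = (Dp D \<alpha> \<beta> p * poly q \<alpha> - poly p \<alpha> * Dp D \<alpha> \<beta> q) / (poly q \<alpha>)^2"

lemma alg_wd:
  fixes P Q R S dP dQ dR dS :: complex
  assumes "Q \<noteq> 0" "S \<noteq> 0" "P * S = R * Q" "S * dP + P * dS = Q * dR + R * dQ"
  shows "(dP * Q - P * dQ) / Q^2 = (dR * S - R * dS) / S^2"
proof -
  have "(dP * Q - P * dQ) * S^2 - (dR * S - R * dS) * Q^2
      = Q * S * (S * dP + P * dS - (Q * dR + R * dQ)) - dQ * S * (P * S - R * Q) + dS * Q * (R * Q - P * S)"
    by (simp add: algebra_simps power2_eq_square)
  also have "\<dots> = 0" using assms by simp
  finally show ?thesis using assms by (simp add: field_simps)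
qed

lemma dq_wd:
  assumes F: "is_subfield F" "is_der F D" "kern F D \<alpha> \<beta>"
    and p: "inF F p" "inF F q" "inF F r" "inF F s" "poly q \<alpha> \<noteq> 0" "poly s \<alpha> \<noteq> 0"
    and eq: "poly p \<alpha> / poly q \<alpha> = poly r \<alpha> / poly s \<alpha>"
  shows "dq D \<alpha> \<beta> p q = dq D \<alpha> \<beta> r s"
proof -
  have e: "poly p \<alpha> * poly s \<alpha> = poly r \<alpha> * poly q \<alpha>" using eq p by (simp add: field_simps)
  have "poly (p * s - r * q) \<alpha> = 0" using e by (simp add: mult.commute)
  moreover have "inF F (p * s - r * q)" using F p by (simp add: inF_diff inF_mult)
  ultimately have "Dp D \<alpha> \<beta> (p * s - r * q) = 0" using F unfolding kern_def by blast
  then have "Dp D \<alpha> \<beta> (p * s) = Dp D \<alpha> \<beta> (r * q)"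
    using F p by (simp add: Dp_diff inF_mult)
  then have "poly s \<alpha> * Dp D \<alpha> \<beta> p + poly p \<alpha> * Dp D \<alpha> \<beta> s = poly q \<alpha> * Dp D \<alpha> \<beta> r + poly r \<alpha> * Dp D \<alpha> \<beta> q"
    using F p by (simp add: Dp_mult)
  then show ?thesis unfolding dq_def using alg_wd[OF p(5,6) e] by blast
qed

definition ext_der :: "complex set \<Rightarrow> (complex \<Rightarrow> complex) \<Rightarrow> complex \<Rightarrow> complex \<Rightarrow> complex \<Rightarrow> complex" where
  "ext_der F D \<alpha> \<beta> z = (SOME v. \<exists>p q. inF F p \<and> inF F q \<and> poly q \<alpha> \<noteq> 0 \<and> z = poly p \<alpha> / poly q \<alpha> \<and> v = dq D \<alpha> \<beta> p q)"

lemma ext_der_eq: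
  assumes F: "is_subfield F" "is_der F D" "kern F D \<alpha> \<beta>"
    and p: "inF F p" "inF F q" "poly q \<alpha> \<noteq> 0" "z = poly p \<alpha> / poly q \<alpha>"
  shows "ext_der F D \<alpha> \<beta> z = dq D \<alpha> \<beta> p q"
proof -
  let ?P = "\<lambda>v. \<exists>p q. inF F p \<and> inF F q \<and> poly q \<alpha> \<noteq> 0 \<and> z = poly p \<alpha> / poly q \<alpha> \<and> v = dq D \<alpha> \<beta> p q"
  have "?P (dq D \<alpha> \<beta> p q)" using p by blast
  then have "?P (ext_der F D \<alpha> \<beta> z)" unfolding ext_der_def by (rule someI)
  then obtain r s where "inF F r" "inF F s" "poly s \<alpha> \<noteq> 0" "z = poly r \<alpha> / poly s \<alpha>"
    "ext_der F D \<alpha> \<beta> z = dq D \<alpha> \<beta> r s" by blast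
  then show ?thesis using dq_wd[OF F p(1,2) _ _ p(3)] p(4) by metis
qed

lemma ext_der_is_der:
  assumes F: "is_subfield F" "is_der F D" "kern F D \<alpha> \<beta>"
  shows "is_der (ext F \<alpha>) (ext_der F D \<alpha> \<beta>)"
  unfolding is_der_def
proof (intro ballI conjI)
  fix a b assume "a \<in> ext F \<alpha>" "b \<in> ext F \<alpha>"
  then obtain p q r s where a: "inF F p" "inF F q" "poly q \<alpha> \<noteq> 0" "a = poly p \<alpha> / poly q \<alpha>"
    and b: "inF F r" "inF F s" "poly s \<alpha> \<noteq> 0" "b = poly r \<alpha> / poly s \<alpha>"
    unfolding ext_def by blast
  note da = ext_der_eq[OF F a] and db = ext_der_eq[OF F b]
  have "ext_der F D \<alpha> \<beta> (a + b) = dq D \<alpha> \<beta> (p * s + r * q) (q * s)"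
    unfolding a(4) b(4) by (rule ext_der_eq[OF F]) (use a(1-3) b(1-3) F in \<open>simp_all add: inF_add inF_mult add_frac_eq\<close>)
  also have "\<dots> = ext_der F D \<alpha> \<beta> a + ext_der F D \<alpha> \<beta> b"
    unfolding da db dq_def unfolding a(4) b(4) using a(1-3) b(1-3) F
    by (simp add: Dp_add Dp_mult inF_mult field_simps power2_eq_square)
  finally show "ext_der F D \<alpha> \<beta> (a + b) = ext_der F D \<alpha> \<beta> a + ext_der F D \<alpha> \<beta> b" .
  have "ext_der F D \<alpha> \<beta> (a * b) = dq D \<alpha> \<beta> (p * r) (q * s)"
    unfolding a(4) b(4) by (rule ext_der_eq[OF F]) (use a(1-3) b(1-3) F in \<open>auto simp: inF_mult field_simps\<close>)
  also have "\<dots> = a * ext_der F D \<alpha> \<beta> b + b * ext_der F D \<alpha> \<beta> a"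
    unfolding da db dq_def unfolding a(4) b(4) using a(1-3) b(1-3) F
    by (simp add: Dp_add Dp_mult inF_mult field_simps power2_eq_square)
  finally show "ext_der F D \<alpha> \<beta> (a * b) = a * ext_der F D \<alpha> \<beta> b + b * ext_der F D \<alpha> \<beta> a" .
qed

lemma ext_der_base:
  assumes F: "is_subfield F" "is_der F D" "kern F D \<alpha> \<beta>" and c: "c \<in> F"
  shows "ext_der F D \<alpha> \<beta> c = D c"
proof -
  have "ext_der F D \<alpha> \<beta> c = dq D \<alpha> \<beta> [:c:] [:1:]"
    by (rule ext_der_eq[OF F]) (auto simp: inF_const c F sf_1)
  then show ?thesis using F by (simp add: dq_def Dp_const der_1)
qed

lemma ext_der_alpha:
  assumes F: "is_subfield F" "is_der F D" "kern F D \<alpha> \<beta>"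
  shows "ext_der F D \<alpha> \<beta> \<alpha> = \<beta>"
proof -
  have "ext_der F D \<alpha> \<beta> \<alpha> = dq D \<alpha> \<beta> [:0,1:] [:1:]"
    by (rule ext_der_eq[OF F]) (auto simp: inF_const inF_X F sf_1)
  then show ?thesis using F by (simp add: dq_def Dp_const Dp_X der_1)
qed

lemma kern_trans:
  assumes "is_subfield F" "is_der F D" "\<forall>p. inF F p \<and> p \<noteq> 0 \<longrightarrow> poly p \<alpha> \<noteq> 0"
  shows "kern F D \<alpha> \<beta>"
  using assms unfolding kern_def by (auto simp: Dp_0)

lemma reduce_deg:
  fixes p \<mu> :: "complex poly"
  assumes "p \<noteq> 0" "\<mu> \<noteq> 0" "degree \<mu> \<le> degree p"
  defines "r \<equiv> p - monom (lead_coeff p / lead_coeff \<mu>) (degree p - degree \<mu>) * \<mu>"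
  shows "r = 0 \<or> degree r < degree p"
proof -
  let ?c = "lead_coeff p / lead_coeff \<mu>" and ?d = "degree p - degree \<mu>"
  have c: "?c \<noteq> 0" using assms by simp
  have dm: "degree (monom ?c ?d * \<mu>) = degree p"
    using assms c by (simp add: degree_mult_eq degree_monom_eq)
  have lm: "lead_coeff (monom ?c ?d * \<mu>) = lead_coeff p"
    using assms c by (simp add: lead_coeff_mult degree_monom_eq)
  have "coeff r (degree p) = 0" unfolding r_def using dm lm by simp
  moreover have "degree r \<le> degree p" unfolding r_def using dm by (intro degree_diff_le) auto
  ultimately show ?thesis
    by (metis le_neq_implies_less leading_coeff_0_iff)
qed

lemma kern_alg:
  assumes F: "is_subfield F" "is_der F D"
    and mu: "inF F \<mu>" "\<mu> \<noteq> 0" "poly \<mu> \<alpha> = 0"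
    and mini: "\<forall>q. inF F q \<and> q \<noteq> 0 \<and> poly q \<alpha> = 0 \<longrightarrow> degree \<mu> \<le> degree q"
  shows "kern F D \<alpha> (- poly (map_poly D \<mu>) \<alpha> / poly (pderiv \<mu>) \<alpha>)"
proof -
  define \<beta> where "\<beta> = - poly (map_poly D \<mu>) \<alpha> / poly (pderiv \<mu>) \<alpha>"
  have dpos: "degree \<mu> \<noteq> 0"
  proof
    assume "degree \<mu> = 0"
    then have "\<mu> = [:coeff \<mu> 0:]" by (simp add: degree_0_id)
    then show False using mu by (metis poly_pCons mult_zero_right add.right_neutral pCons_0_0 poly_0)
  qed
  have pd: "poly (pderiv \<mu>) \<alpha> \<noteq> 0"
  proof
    assume "poly (pderiv \<mu>) \<alpha> = 0"
    moreover have "pderiv \<mu> \<noteq> 0" using dpos by (simp add: pderiv_eq_0_iff)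
    moreover have "inF F (pderiv \<mu>)" using F mu by (simp add: inF_pderiv)
    ultimately have "degree \<mu> \<le> degree (pderiv \<mu>)" using mini by blast
    then show False using dpos by (simp add: degree_pderiv)
  qed
  have Dmu: "Dp D \<alpha> \<beta> \<mu> = 0" using pd unfolding Dp_def \<beta>_def by (simp add: field_simps)
  have main: "\<And>p. inF F p \<Longrightarrow> poly p \<alpha> = 0 \<Longrightarrow> Dp D \<alpha> \<beta> p = 0"
  proof -
    fix p show "inF F p \<Longrightarrow> poly p \<alpha> = 0 \<Longrightarrow> Dp D \<alpha> \<beta> p = 0"
    proof (induction "degree p" arbitrary: p rule: less_induct)
      case less
      show ?case
      proof (cases "p = 0")
        case True then show ?thesis using F by (simp add: Dp_0)
      next
        case False
        then have le: "degree \<mu> \<le> degree p" using mini less.prems by blast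
        define m where "m = monom (lead_coeff p / lead_coeff \<mu>) (degree p - degree \<mu>)"
        define r where "r = p - m * \<mu>"
        have mF: "inF F m" unfolding m_def using F mu less.prems
          by (intro inF_monom sf_divide) (auto simp: inF_def)
        have rF: "inF F r" unfolding r_def using F mF mu less.prems by (simp add: inF_diff inF_mult)
        have r0: "poly r \<alpha> = 0" unfolding r_def using less.prems mu by simp
        have "r = 0 \<or> degree r < degree p" unfolding r_def m_def using reduce_deg[OF False mu(2) le] by simp
        then have Dr: "Dp D \<alpha> \<beta> r = 0"
          using less.hyps rF r0 F by (auto simp: Dp_0)
        have "p = r + m * \<mu>" unfolding r_def by simp
        then have "Dp D \<alpha> \<beta> p = Dp D \<alpha> \<beta> r + Dp D \<alpha> \<beta> (m * \<mu>)"
          using F rF mF mu by (simp add: Dp_add inF_mult)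
        also have "\<dots> = 0" using Dr F mF mu Dmu by (simp add: Dp_mult)
        finally show ?thesis .
      qed
    qed
  qed
  then show ?thesis unfolding kern_def \<beta>_def by blast
qed

lemma kern_exists:
  assumes F: "is_subfield F" "is_der F D"
  shows "\<exists>\<beta>. kern F D \<alpha> \<beta>"
proof (cases "\<exists>p. inF F p \<and> p \<noteq> 0 \<and> poly p \<alpha> = 0")
  case True
  then obtain p where "inF F p \<and> p \<noteq> 0 \<and> poly p \<alpha> = 0" by blast
  from ex_has_least_nat[of "\<lambda>p. inF F p \<and> p \<noteq> 0 \<and> poly p \<alpha> = 0", OF this, of degree]
  obtain \<mu> where "inF F \<mu> \<and> \<mu> \<noteq> 0 \<and> poly \<mu> \<alpha> = 0"
    "\<forall>q. inF F q \<and> q \<noteq> 0 \<and> poly q \<alpha> = 0 \<longrightarrow> degree \<mu> \<le> degree q" by blast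
  then show ?thesis using kern_alg[OF F] by blast
next
  case False
  then show ?thesis using kern_trans[OF F] by blast
qed

lemma extend:
  assumes F: "is_subfield F" "is_der F D" "kern F D \<alpha> \<beta>"
  shows "\<exists>D'. is_der (ext F \<alpha>) D' \<and> (\<forall>c\<in>F. D' c = D c) \<and> D' \<alpha> = \<beta>"
  using ext_der_is_der[OF F] ext_der_base[OF F] ext_der_alpha[OF F] by blast

definition monV :: "'v set \<Rightarrow> ('v \<Rightarrow>\<^sub>0 nat) \<Rightarrow> ('v \<Rightarrow> complex) \<Rightarrow> complex" where
  "monV V mo a = (\<Prod>w\<in>V. a w ^ Poly_Mapping.lookup mo w)"

lemma monV_keys: "finite V \<Longrightarrow> Poly_Mapping.keys mo \<subseteq> V \<Longrightarrow>
  (\<Prod>w\<in>Poly_Mapping.keys mo. a w ^ Poly_Mapping.lookup mo w) = monV V mo a"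
  unfolding monV_def
  by (rule prod.mono_neutral_left) (auto simp: in_keys_iff)

lemma eval_superset:
  fixes p :: "'v mpoly_c"
  assumes "finite S" "Poly_Mapping.keys p \<subseteq> S"
  shows "mpoly_eval p a = (\<Sum>mo\<in>S. Poly_Mapping.lookup p mo *
        (\<Prod>v\<in>Poly_Mapping.keys mo. a v ^ Poly_Mapping.lookup mo v))"
  unfolding mpoly_eval_def using assms
  by (intro sum.mono_neutral_left) (auto simp: in_keys_iff)

lemma eval_add: "mpoly_eval (p + q) a = mpoly_eval p a + mpoly_eval q a"
proof -
  let ?S = "Poly_Mapping.keys p \<union> Poly_Mapping.keys q"
  have "mpoly_eval (p + q) a = (\<Sum>mo\<in>?S. Poly_Mapping.lookup (p + q) mo *
        (\<Prod>v\<in>Poly_Mapping.keys mo. a v ^ Poly_Mapping.lookup mo v))"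
    by (rule eval_superset) (auto dest: set_mp[OF keys_add])
  also have "\<dots> = mpoly_eval p a + mpoly_eval q a"
    by (subst (1 2) eval_superset[of ?S]) (auto simp: lookup_add algebra_simps sum.distrib)
  finally show ?thesis .
qed

lemma eval_zero [simp]: "mpoly_eval 0 a = 0"
  by (simp add: mpoly_eval_def)

lemma eval_sum: "mpoly_eval (sum f A) a = (\<Sum>i\<in>A. mpoly_eval (f i) a)"
  by (induction A rule: infinite_finite_induct) (auto simp: eval_add)

lemma eval_single0: "mpoly_eval (Poly_Mapping.single 0 c) a = c"
  by (cases "c = 0") (auto simp: mpoly_eval_def)

lemma keys_add_nat: "Poly_Mapping.keys ((m1::'v \<Rightarrow>\<^sub>0 nat) + m2) = Poly_Mapping.keys m1 \<union> Poly_Mapping.keys m2"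
  by (auto simp: in_keys_iff lookup_add)

lemma add_single_minus: "((mo::'v \<Rightarrow>\<^sub>0 nat) + Poly_Mapping.single v 1) - Poly_Mapping.single v 1 = mo"
  by (rule poly_mapping_eqI) (simp add: lookup_add lookup_minus)

lemma minus_single_add: "1 \<le> Poly_Mapping.lookup (mo::'v \<Rightarrow>\<^sub>0 nat) v \<Longrightarrow>
   (mo - Poly_Mapping.single v 1) + Poly_Mapping.single v 1 = mo"
  by (rule poly_mapping_eqI) (auto simp: lookup_add lookup_minus lookup_single when_def)

lemma keys_minus_single: "Poly_Mapping.keys ((mo::'v \<Rightarrow>\<^sub>0 nat) - Poly_Mapping.single v 1) \<subseteq> Poly_Mapping.keys mo"
  by (auto simp: in_keys_iff lookup_minus)

lemma lookup_pderiv: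
  "Poly_Mapping.lookup (mpoly_pderiv v p) mo =
     of_nat (Poly_Mapping.lookup mo v + 1) * Poly_Mapping.lookup p (mo + Poly_Mapping.single v 1)"
proof -
  have "{mo. of_nat (Poly_Mapping.lookup mo v + 1) * Poly_Mapping.lookup p (mo + Poly_Mapping.single v 1) \<noteq> (0::complex)}
      \<subseteq> (\<lambda>m. m - Poly_Mapping.single v 1) ` Poly_Mapping.keys p"
  proof
    fix mo assume "mo \<in> {mo. of_nat (Poly_Mapping.lookup mo v + 1) * Poly_Mapping.lookup p (mo + Poly_Mapping.single v 1) \<noteq> (0::complex)}"
    then have "mo + Poly_Mapping.single v 1 \<in> Poly_Mapping.keys p" by (auto simp: in_keys_iff)
    then show "mo \<in> (\<lambda>m. m - Poly_Mapping.single v 1) ` Poly_Mapping.keys p"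
      by (metis add_single_minus image_eqI)
  qed
  then have "finite {mo. of_nat (Poly_Mapping.lookup mo v + 1) * Poly_Mapping.lookup p (mo + Poly_Mapping.single v 1) \<noteq> (0::complex)}"
    by (rule finite_subset) simp
  then show ?thesis unfolding mpoly_pderiv_def by simp
qed

lemma keys_pderiv: "Poly_Mapping.keys (mpoly_pderiv v p) \<subseteq>
   (\<lambda>m. m - Poly_Mapping.single v 1) ` (Poly_Mapping.keys p \<inter> {mo. 1 \<le> Poly_Mapping.lookup mo v})"
proof
  fix mo assume "mo \<in> Poly_Mapping.keys (mpoly_pderiv v p)"
  then have "mo + Poly_Mapping.single v 1 \<in> Poly_Mapping.keys p" by (auto simp: in_keys_iff lookup_pderiv)
  moreover have "1 \<le> Poly_Mapping.lookup (mo + Poly_Mapping.single v 1) v" by (simp add: lookup_add)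
  ultimately show "mo \<in> (\<lambda>m. m - Poly_Mapping.single v 1) ` (Poly_Mapping.keys p \<inter> {mo. 1 \<le> Poly_Mapping.lookup mo v})"
    by (metis (mono_tags, lifting) IntI add_single_minus image_eqI mem_Collect_eq)
qed

lemma coeffs_pderiv: "is_subfield L \<Longrightarrow> coeffs_in L p \<Longrightarrow> coeffs_in L (mpoly_pderiv v p)"
  by (simp add: coeffs_in_def lookup_pderiv sf_mult sf_of_nat sf_add sf_1)

lemma vars_pderiv: "vars_in V p \<Longrightarrow> vars_in V (mpoly_pderiv v p)"
  unfolding vars_in_def using keys_pderiv[of v p] keys_minus_single by fastforce

lemma eval_pderiv:
  fixes p :: "'v mpoly_c"
  assumes V: "finite V" "vars_in V p"
  shows "mpoly_eval (mpoly_pderiv v p) a =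
    (\<Sum>mo\<in>Poly_Mapping.keys p. Poly_Mapping.lookup p mo * of_nat (Poly_Mapping.lookup mo v) *
        monV V (mo - Poly_Mapping.single v 1) a)"
proof -
  let ?e = "Poly_Mapping.single v (1::nat)"
  let ?A = "Poly_Mapping.keys p \<inter> {mo. 1 \<le> Poly_Mapping.lookup mo v}"
  let ?h = "\<lambda>m. m - ?e"
  have inj: "inj_on ?h ?A"
  proof (rule inj_onI)
    fix x y assume xy: "x \<in> ?A" "y \<in> ?A" "?h x = ?h y"
    have "x = ?h x + ?e" using xy(1) by (intro minus_single_add[symmetric]) simp
    also have "\<dots> = ?h y + ?e" using xy(3) by simp
    also have "\<dots> = y" using xy(2) by (intro minus_single_add) simp
    finally show "x = y" .
  qed
  have kA: "\<And>mo. mo \<in> ?h ` ?A \<Longrightarrow> Poly_Mapping.keys mo \<subseteq> V"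
  proof -
    fix mo assume "mo \<in> ?h ` ?A"
    then obtain m where m: "m \<in> Poly_Mapping.keys p" "mo = m - ?e" by blast
    have "Poly_Mapping.keys m \<subseteq> V" using V(2) m(1) unfolding vars_in_def by blast
    then show "Poly_Mapping.keys mo \<subseteq> V" using keys_minus_single[of m v] m(2) by blast
  qed
  have "mpoly_eval (mpoly_pderiv v p) a = (\<Sum>mo\<in>?h ` ?A. Poly_Mapping.lookup (mpoly_pderiv v p) mo *
        (\<Prod>w\<in>Poly_Mapping.keys mo. a w ^ Poly_Mapping.lookup mo w))"
    by (rule eval_superset) (use keys_pderiv[of v p] in auto)
  also have "\<dots> = (\<Sum>mo\<in>?h ` ?A. Poly_Mapping.lookup (mpoly_pderiv v p) mo * monV V mo a)"
    by (intro sum.cong refl) (simp add: monV_keys[OF V(1) kA])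
  also have "\<dots> = (\<Sum>mo\<in>?A. Poly_Mapping.lookup (mpoly_pderiv v p) (?h mo) * monV V (?h mo) a)"
    by (subst sum.reindex[OF inj]) simp
  also have "\<dots> = (\<Sum>mo\<in>?A. Poly_Mapping.lookup p mo * of_nat (Poly_Mapping.lookup mo v) *
        monV V (mo - ?e) a)"
  proof (intro sum.cong refl)
    fix mo assume "mo \<in> ?A"
    then have one: "1 \<le> Poly_Mapping.lookup mo v" by simp
    have ms: "mo - Poly_Mapping.single v (Suc 0) + Poly_Mapping.single v (Suc 0) = mo"
      using minus_single_add[OF one] by simp
    from \<open>1 \<le> _\<close> show "Poly_Mapping.lookup (mpoly_pderiv v p) (?h mo) * monV V (?h mo) a =
       Poly_Mapping.lookup p mo * of_nat (Poly_Mapping.lookup mo v) * monV V (mo - ?e) a"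
      by (simp add: lookup_pderiv ms lookup_minus)
  qed
  also have "\<dots> = (\<Sum>mo\<in>Poly_Mapping.keys p. Poly_Mapping.lookup p mo * of_nat (Poly_Mapping.lookup mo v) *
        monV V (mo - ?e) a)"
    by (intro sum.mono_neutral_left) auto
  finally show ?thesis .
qed

lemma der_monV:
  assumes G: "is_subfield G" "is_der G D" and V: "finite V" "\<And>v. v \<in> V \<Longrightarrow> a v \<in> G"
  shows "D (monV V mo a) = (\<Sum>v\<in>V. of_nat (Poly_Mapping.lookup mo v) *
           monV V (mo - Poly_Mapping.single v 1) a * D (a v))"
proof -
  have "D (monV V mo a) = (\<Sum>v\<in>V. D (a v ^ Poly_Mapping.lookup mo v) *
           (\<Prod>w\<in>V - {v}. a w ^ Poly_Mapping.lookup mo w))"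
    unfolding monV_def by (rule der_prod[OF V(1) G]) (simp add: sf_power G V)
  also have "\<dots> = (\<Sum>v\<in>V. of_nat (Poly_Mapping.lookup mo v) *
           monV V (mo - Poly_Mapping.single v 1) a * D (a v))"
  proof (intro sum.cong refl)
    fix v assume v: "v \<in> V"
    have m: "monV V (mo - Poly_Mapping.single v 1) a =
       a v ^ (Poly_Mapping.lookup mo v - 1) * (\<Prod>w\<in>V - {v}. a w ^ Poly_Mapping.lookup mo w)"
    proof -
      have "monV V (mo - Poly_Mapping.single v 1) a = a v ^ (Poly_Mapping.lookup mo v - 1) *
            (\<Prod>w\<in>V - {v}. a w ^ Poly_Mapping.lookup (mo - Poly_Mapping.single v 1) w)"
        unfolding monV_def using v V(1) by (simp add: prod.remove lookup_minus)
      also have "(\<Prod>w\<in>V - {v}. a w ^ Poly_Mapping.lookup (mo - Poly_Mapping.single v 1) w) =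
          (\<Prod>w\<in>V - {v}. a w ^ Poly_Mapping.lookup mo w)"
        by (intro prod.cong refl) (auto simp: lookup_minus lookup_single)
      finally show ?thesis .
    qed
    show "D (a v ^ Poly_Mapping.lookup mo v) * (\<Prod>w\<in>V - {v}. a w ^ Poly_Mapping.lookup mo w) =
        of_nat (Poly_Mapping.lookup mo v) * monV V (mo - Poly_Mapping.single v 1) a * D (a v)"
    proof (cases "Poly_Mapping.lookup mo v")
      case 0 then show ?thesis using G by (simp add: der_1)
    next
      case (Suc k)
      then show ?thesis unfolding m using der_power[OF G V(2)[OF v], of k] by (simp add: mult_ac)
    qed
  qed
  finally show ?thesis .
qed

lemma chain_rule:
  fixes p :: "'v mpoly_c"
  assumes G: "is_subfield G" "is_der G D"
    and C: "C \<subseteq> G" "\<And>c. c \<in> C \<Longrightarrow> D c = 0" "coeffs_in C p"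
    and V: "finite V" "vars_in V p" "\<And>v. v \<in> V \<Longrightarrow> a v \<in> G"
  shows "D (mpoly_eval p a) = (\<Sum>v\<in>V. mpoly_eval (mpoly_pderiv v p) a * D (a v))"
proof -
  have cG: "\<And>mo. Poly_Mapping.lookup p mo \<in> G" using C unfolding coeffs_in_def by blast
  have cD: "\<And>mo. D (Poly_Mapping.lookup p mo) = 0" using C unfolding coeffs_in_def by blast
  have mG: "\<And>mo. monV V mo a \<in> G" unfolding monV_def using G V by (intro sf_prod sf_power) auto
  have kV: "\<And>mo. mo \<in> Poly_Mapping.keys p \<Longrightarrow> Poly_Mapping.keys mo \<subseteq> V"
    using V unfolding vars_in_def by blast
  have "mpoly_eval p a = (\<Sum>mo\<in>Poly_Mapping.keys p. Poly_Mapping.lookup p mo * monV V mo a)"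
    unfolding mpoly_eval_def by (intro sum.cong refl) (simp add: monV_keys[OF V(1) kV])
  then have "D (mpoly_eval p a) = (\<Sum>mo\<in>Poly_Mapping.keys p. D (Poly_Mapping.lookup p mo * monV V mo a))"
    using G cG mG by (simp add: der_sum sf_mult)
  also have "\<dots> = (\<Sum>mo\<in>Poly_Mapping.keys p. Poly_Mapping.lookup p mo * D (monV V mo a))"
    using G cG mG cD by (simp add: der_mult)
  also have "\<dots> = (\<Sum>mo\<in>Poly_Mapping.keys p. \<Sum>v\<in>V. Poly_Mapping.lookup p mo * (of_nat (Poly_Mapping.lookup mo v) *
           monV V (mo - Poly_Mapping.single v 1) a * D (a v)))"
    using der_monV[OF G V(1) V(3)] by (simp add: sum_distrib_left)
  also have "\<dots> = (\<Sum>v\<in>V. \<Sum>mo\<in>Poly_Mapping.keys p. Poly_Mapping.lookup p mo * of_nat (Poly_Mapping.lookup mo v) *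
           monV V (mo - Poly_Mapping.single v 1) a * D (a v))"
    by (subst sum.swap) (simp add: mult_ac)
  also have "\<dots> = (\<Sum>v\<in>V. mpoly_eval (mpoly_pderiv v p) a * D (a v))"
    by (simp add: eval_pderiv[OF V(1,2)] sum_distrib_right)
  finally show ?thesis .
qed

definition mdeg :: "('v \<Rightarrow>\<^sub>0 nat) \<Rightarrow> nat" where
  "mdeg mo = sum (Poly_Mapping.lookup mo) (Poly_Mapping.keys mo)"

definition tdeg :: "'v mpoly_c \<Rightarrow> nat" where
  "tdeg p = Max (insert 0 (mdeg ` Poly_Mapping.keys p))"

lemma mdeg_superset: "finite S \<Longrightarrow> Poly_Mapping.keys mo \<subseteq> S \<Longrightarrow> mdeg mo = sum (Poly_Mapping.lookup mo) S"
  unfolding mdeg_def by (rule sum.mono_neutral_left) (auto simp: in_keys_iff)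

lemma mdeg_add_single: "mdeg (mo + Poly_Mapping.single v 1) = mdeg mo + 1"
proof -
  let ?S = "insert v (Poly_Mapping.keys mo)"
  have "mdeg (mo + Poly_Mapping.single v 1) = sum (Poly_Mapping.lookup (mo + Poly_Mapping.single v 1)) ?S"
    by (rule mdeg_superset) (auto simp: keys_add_nat)
  also have "\<dots> = sum (Poly_Mapping.lookup mo) ?S + sum (Poly_Mapping.lookup (Poly_Mapping.single v 1)) ?S"
    by (simp add: lookup_add sum.distrib)
  also have "sum (Poly_Mapping.lookup (Poly_Mapping.single v (1::nat))) ?S = 1"
    by (simp add: lookup_single when_def)
  also have "sum (Poly_Mapping.lookup mo) ?S = mdeg mo"
    by (rule mdeg_superset[symmetric]) auto
  finally show ?thesis .
qed

lemma tdeg_ge: "mo \<in> Poly_Mapping.keys p \<Longrightarrow> mdeg mo \<le> tdeg p"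
  unfolding tdeg_def by (rule Max_ge) auto

lemma tdeg_pderiv: assumes "mpoly_pderiv v p \<noteq> 0" shows "tdeg (mpoly_pderiv v p) < tdeg p"
proof -
  have ne: "Poly_Mapping.keys (mpoly_pderiv v p) \<noteq> {}" using assms by simp
  have lt: "mdeg mo < tdeg p" if "mo \<in> Poly_Mapping.keys (mpoly_pderiv v p)" for mo
  proof -
    have "mo + Poly_Mapping.single v 1 \<in> Poly_Mapping.keys p"
      using that by (auto simp: in_keys_iff lookup_pderiv)
    then have "mdeg (mo + Poly_Mapping.single v 1) \<le> tdeg p" by (rule tdeg_ge)
    then show ?thesis using mdeg_add_single[of mo v] by linarith
  qed
  from ne obtain mo0 where "mo0 \<in> Poly_Mapping.keys (mpoly_pderiv v p)" by blast
  then have "0 < tdeg p" using lt by fastforce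
  then show ?thesis unfolding tdeg_def[of "mpoly_pderiv v p"] using lt
    by (subst Max_less_iff) auto
qed

lemma const_of_pderivs:
  assumes "vars_in V p" "\<And>v. v \<in> V \<Longrightarrow> mpoly_pderiv v p = 0"
  shows "Poly_Mapping.keys p \<subseteq> {0}"
proof
  fix mo assume mo: "mo \<in> Poly_Mapping.keys p"
  show "mo \<in> {0}"
  proof (rule ccontr)
    assume "mo \<notin> {0}"
    then have "Poly_Mapping.keys mo \<noteq> {}" by simp
    then obtain v where v: "v \<in> Poly_Mapping.keys mo" by blast
    then have vV: "v \<in> V" using assms(1) mo unfolding vars_in_def by blast
    have one: "1 \<le> Poly_Mapping.lookup mo v" using v by (simp add: in_keys_iff)
    have ms: "mo - Poly_Mapping.single v (Suc 0) + Poly_Mapping.single v (Suc 0) = mo"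
      using minus_single_add[OF one] by simp
    have "Poly_Mapping.lookup (mpoly_pderiv v p) (mo - Poly_Mapping.single v 1) =
        of_nat (Poly_Mapping.lookup mo v) * Poly_Mapping.lookup p mo"
      using one by (simp add: lookup_pderiv ms lookup_minus)
    moreover have "\<dots> \<noteq> 0" using one mo by (simp add: in_keys_iff)
    ultimately show False using assms(2)[OF vV] by simp
  qed
qed

lemma eval_const: "Poly_Mapping.keys p \<subseteq> {0} \<Longrightarrow> mpoly_eval p a = Poly_Mapping.lookup p 0"
  by (subst eval_superset[of "{0}"]) auto

definition mshift :: "'v \<Rightarrow> nat \<Rightarrow> 'v mpoly_c \<Rightarrow> 'v mpoly_c" where
  "mshift i d q = Abs_poly_mapping (\<lambda>mo. if d \<le> Poly_Mapping.lookup mo i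
      then Poly_Mapping.lookup q (mo - Poly_Mapping.single i d) else 0)"

lemma add_single_minus_d: "((mo::'v \<Rightarrow>\<^sub>0 nat) + Poly_Mapping.single v d) - Poly_Mapping.single v d = mo"
  by (rule poly_mapping_eqI) (simp add: lookup_add lookup_minus)

lemma minus_single_add_d: "d \<le> Poly_Mapping.lookup (mo::'v \<Rightarrow>\<^sub>0 nat) v \<Longrightarrow>
   (mo - Poly_Mapping.single v d) + Poly_Mapping.single v d = mo"
  by (rule poly_mapping_eqI) (auto simp: lookup_add lookup_minus lookup_single when_def)

lemma lookup_mshift: "Poly_Mapping.lookup (mshift i d q) mo = (if d \<le> Poly_Mapping.lookup mo i
      then Poly_Mapping.lookup q (mo - Poly_Mapping.single i d) else 0)"
proof -
  have "{mo. (if d \<le> Poly_Mapping.lookup mo i then Poly_Mapping.lookup q (mo - Poly_Mapping.single i d) else 0) \<noteq> 0}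
     \<subseteq> (\<lambda>m. m + Poly_Mapping.single i d) ` Poly_Mapping.keys q"
  proof
    fix mo assume "mo \<in> {mo. (if d \<le> Poly_Mapping.lookup mo i then Poly_Mapping.lookup q (mo - Poly_Mapping.single i d) else 0) \<noteq> 0}"
    then have "d \<le> Poly_Mapping.lookup mo i" "mo - Poly_Mapping.single i d \<in> Poly_Mapping.keys q"
      by (auto simp: in_keys_iff split: if_splits)
    then show "mo \<in> (\<lambda>m. m + Poly_Mapping.single i d) ` Poly_Mapping.keys q"
      using minus_single_add_d[of d mo i] by (metis image_eqI)
  qed
  then have "finite {mo. (if d \<le> Poly_Mapping.lookup mo i then Poly_Mapping.lookup q (mo - Poly_Mapping.single i d) else 0) \<noteq> 0}"
    by (rule finite_subset) simp
  then show ?thesis unfolding mshift_def by simp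
qed

lemma keys_mshift: "Poly_Mapping.keys (mshift i d q) = (\<lambda>m. m + Poly_Mapping.single i d) ` Poly_Mapping.keys q"
proof
  show "Poly_Mapping.keys (mshift i d q) \<subseteq> (\<lambda>m. m + Poly_Mapping.single i d) ` Poly_Mapping.keys q"
  proof
    fix mo assume "mo \<in> Poly_Mapping.keys (mshift i d q)"
    then have "d \<le> Poly_Mapping.lookup mo i" "mo - Poly_Mapping.single i d \<in> Poly_Mapping.keys q"
      by (auto simp: in_keys_iff lookup_mshift split: if_splits)
    then show "mo \<in> (\<lambda>m. m + Poly_Mapping.single i d) ` Poly_Mapping.keys q"
      using minus_single_add_d[of d mo i] by (metis image_eqI)
  qed
  show "(\<lambda>m. m + Poly_Mapping.single i d) ` Poly_Mapping.keys q \<subseteq> Poly_Mapping.keys (mshift i d q)"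
    by (auto simp: in_keys_iff lookup_mshift lookup_add add_single_minus_d)
qed

lemma mon_shift:
  fixes a :: "'v \<Rightarrow> complex"
  assumes "i \<notin> Poly_Mapping.keys m"
  shows "(\<Prod>w\<in>Poly_Mapping.keys (m + Poly_Mapping.single i d). a w ^ Poly_Mapping.lookup (m + Poly_Mapping.single i d) w)
     = (\<Prod>w\<in>Poly_Mapping.keys m. a w ^ Poly_Mapping.lookup m w) * a i ^ d"
proof -
  let ?V = "insert i (Poly_Mapping.keys m)"
  have "(\<Prod>w\<in>Poly_Mapping.keys (m + Poly_Mapping.single i d). a w ^ Poly_Mapping.lookup (m + Poly_Mapping.single i d) w)
      = monV ?V (m + Poly_Mapping.single i d) a"
    by (rule monV_keys) (auto simp: keys_add_nat)
  also have "\<dots> = monV ?V m a * (\<Prod>w\<in>?V. a w ^ Poly_Mapping.lookup (Poly_Mapping.single i d) w)"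
    unfolding monV_def by (simp add: lookup_add power_add prod.distrib)
  also have "(\<Prod>w\<in>?V. a w ^ Poly_Mapping.lookup (Poly_Mapping.single i d) w) = a i ^ d"
  proof -
    have "(\<Prod>w\<in>Poly_Mapping.keys m. a w ^ Poly_Mapping.lookup (Poly_Mapping.single i d) w) = 1"
      by (rule prod.neutral) (use assms in \<open>auto simp: lookup_single when_def\<close>)
    then show ?thesis using assms by (simp add: prod.insert)
  qed
  also have "monV ?V m a = (\<Prod>w\<in>Poly_Mapping.keys m. a w ^ Poly_Mapping.lookup m w)"
    by (rule monV_keys[symmetric]) auto
  finally show ?thesis .
qed

lemma eval_mshift:
  assumes "\<And>m. m \<in> Poly_Mapping.keys q \<Longrightarrow> i \<notin> Poly_Mapping.keys m"
  shows "mpoly_eval (mshift i d q) a = mpoly_eval q a * a i ^ d"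
proof -
  have inj: "inj_on (\<lambda>m. m + Poly_Mapping.single i d) (Poly_Mapping.keys q)"
    by (rule inj_onI) (metis add_single_minus_d)
  have "mpoly_eval (mshift i d q) a = (\<Sum>mo\<in>Poly_Mapping.keys q.
      Poly_Mapping.lookup (mshift i d q) (mo + Poly_Mapping.single i d) *
      (\<Prod>w\<in>Poly_Mapping.keys (mo + Poly_Mapping.single i d). a w ^ Poly_Mapping.lookup (mo + Poly_Mapping.single i d) w))"
    unfolding mpoly_eval_def keys_mshift by (subst sum.reindex[OF inj]) simp
  also have "\<dots> = (\<Sum>mo\<in>Poly_Mapping.keys q. Poly_Mapping.lookup q mo *
      (\<Prod>w\<in>Poly_Mapping.keys mo. a w ^ Poly_Mapping.lookup mo w) * a i ^ d)"
  proof (intro sum.cong refl)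
    fix mo assume mo: "mo \<in> Poly_Mapping.keys q"
    have "Poly_Mapping.lookup (mshift i d q) (mo + Poly_Mapping.single i d) = Poly_Mapping.lookup q mo"
      by (simp add: lookup_mshift lookup_add add_single_minus_d)
    then show "Poly_Mapping.lookup (mshift i d q) (mo + Poly_Mapping.single i d) *
      (\<Prod>w\<in>Poly_Mapping.keys (mo + Poly_Mapping.single i d). a w ^ Poly_Mapping.lookup (mo + Poly_Mapping.single i d) w) =
      Poly_Mapping.lookup q mo * (\<Prod>w\<in>Poly_Mapping.keys mo. a w ^ Poly_Mapping.lookup mo w) * a i ^ d"
      using mon_shift[OF assms[OF mo], where a=a and d=d] by (simp add: mult.assoc)
  qed
  also have "\<dots> = mpoly_eval q a * a i ^ d"
    unfolding mpoly_eval_def by (simp add: sum_distrib_right)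
  finally show ?thesis .
qed

definition is_subring :: "complex set \<Rightarrow> bool" where
  "is_subring S \<longleftrightarrow> 0 \<in> S \<and> 1 \<in> S \<and> (\<forall>a\<in>S. \<forall>b\<in>S. a + b \<in> S \<and> a - b \<in> S \<and> a * b \<in> S)"

lemma subfield_ring: "is_subfield F \<Longrightarrow> is_subring F"
  by (simp add: is_subfield_def is_subring_def)

lemma sr_0: "is_subring S \<Longrightarrow> 0 \<in> S" by (simp add: is_subring_def)
lemma sr_1: "is_subring S \<Longrightarrow> 1 \<in> S" by (simp add: is_subring_def)
lemma sr_add: "is_subring S \<Longrightarrow> a \<in> S \<Longrightarrow> b \<in> S \<Longrightarrow> a + b \<in> S" by (simp add: is_subring_def)
lemma sr_diff: "is_subring S \<Longrightarrow> a \<in> S \<Longrightarrow> b \<in> S \<Longrightarrow> a - b \<in> S" by (simp add: is_subring_def)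
lemma sr_mult: "is_subring S \<Longrightarrow> a \<in> S \<Longrightarrow> b \<in> S \<Longrightarrow> a * b \<in> S" by (simp add: is_subring_def)
lemma sr_sum: "is_subring S \<Longrightarrow> (\<And>i. i \<in> A \<Longrightarrow> f i \<in> S) \<Longrightarrow> sum f A \<in> S"
  by (induction A rule: infinite_finite_induct) (auto simp: sr_0 sr_add)
lemma sr_prod: "is_subring S \<Longrightarrow> (\<And>i. i \<in> A \<Longrightarrow> f i \<in> S) \<Longrightarrow> prod f A \<in> S"
  by (induction A rule: infinite_finite_induct) (auto simp: sr_1 sr_mult)
lemma sr_power: "is_subring S \<Longrightarrow> a \<in> S \<Longrightarrow> a ^ n \<in> S"
  by (induction n) (auto simp: sr_1 sr_mult)

lemma inF_add_r: "is_subring F \<Longrightarrow> inF F p \<Longrightarrow> inF F q \<Longrightarrow> inF F (p + q)"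
  by (simp add: inF_def sr_add)
lemma inF_diff_r: "is_subring F \<Longrightarrow> inF F p \<Longrightarrow> inF F q \<Longrightarrow> inF F (p - q)"
  by (simp add: inF_def sr_diff)
lemma inF_mult_r: "is_subring F \<Longrightarrow> inF F p \<Longrightarrow> inF F q \<Longrightarrow> inF F (p * q)"
  by (simp add: inF_def coeff_mult sr_sum sr_mult)
lemma inF_const_r: "is_subring F \<Longrightarrow> c \<in> F \<Longrightarrow> inF F [:c:]"
  by (auto simp: inF_def coeff_pCons sr_0 split: nat.split)

primrec ExR :: "complex set \<Rightarrow> (nat \<Rightarrow> complex) \<Rightarrow> nat \<Rightarrow> complex set" where
  "ExR K x 0 = K"
| "ExR K x (Suc i) = {poly q (x i) | q. inF (ExR K x i) q}"

primrec FxF :: "complex set \<Rightarrow> (nat \<Rightarrow> complex) \<Rightarrow> nat \<Rightarrow> complex set" where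
  "FxF K x 0 = K"
| "FxF K x (Suc i) = ext (FxF K x i) (x i)"

lemma Ex_ring: "is_subfield K \<Longrightarrow> is_subring (ExR K x i)"
proof (induction i)
  case 0 then show ?case by (simp add: subfield_ring)
next
  case (Suc i)
  let ?S = "ExR K x i"
  have S: "is_subring ?S" using Suc by simp
  have "0 \<in> ExR K x (Suc i)" using inF_const_r[OF S sr_0[OF S]] by (auto intro!: exI[of _ 0])
  moreover have "1 \<in> ExR K x (Suc i)" using inF_const_r[OF S sr_1[OF S]] by (auto intro!: exI[of _ "[:1:]"])
  moreover
  { fix a b assume "a \<in> ExR K x (Suc i)" "b \<in> ExR K x (Suc i)"
    then obtain p q where p: "inF ?S p" "a = poly p (x i)" "inF ?S q" "b = poly q (x i)" by auto
    have "a + b \<in> ExR K x (Suc i)" using S p by (auto intro!: exI[of _ "p + q"] simp: inF_add_r)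
    moreover have "a - b \<in> ExR K x (Suc i)" using S p by (auto intro!: exI[of _ "p - q"] simp: inF_diff_r)
    moreover have "a * b \<in> ExR K x (Suc i)" using S p by (auto intro!: exI[of _ "p * q"] simp: inF_mult_r)
    ultimately have "a + b \<in> ExR K x (Suc i) \<and> a - b \<in> ExR K x (Suc i) \<and> a * b \<in> ExR K x (Suc i)" by blast }
  ultimately show ?case unfolding is_subring_def by blast
qed

lemma build_mpoly:
  fixes a :: "nat \<Rightarrow> nat mpoly_c" and N :: nat and x :: "nat \<Rightarrow> complex"
  assumes K: "is_subfield K" and a: "\<And>d. coeffs_in K (a d)" "\<And>d. vars_in {..<i} (a d)"
  defines "A \<equiv> (\<Sum>d\<le>N. mshift i d (a d))"
  shows "coeffs_in K A" "vars_in {..<Suc i} A"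
    "mpoly_eval A x = (\<Sum>d\<le>N. mpoly_eval (a d) x * x i ^ d)"
    "d0 \<le> N \<Longrightarrow> a d0 \<noteq> 0 \<Longrightarrow> A \<noteq> 0"
proof -
  have noi: "i \<notin> Poly_Mapping.keys m" if "m \<in> Poly_Mapping.keys (a d)" for d m
  proof -
    have "Poly_Mapping.keys m \<subseteq> {..<i}" using a(2)[of d] that unfolding vars_in_def by blast
    then show ?thesis by auto
  qed
  show "coeffs_in K A" unfolding coeffs_in_def A_def lookup_sum lookup_mshift
    using K a(1) unfolding coeffs_in_def by (auto intro!: sf_sum simp: sf_0)
  show "vars_in {..<Suc i} A" unfolding vars_in_def
  proof
    fix mo assume mo: "mo \<in> Poly_Mapping.keys A"
    have "mo \<in> (\<Union>d\<in>{..N}. Poly_Mapping.keys (mshift i d (a d)))"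
      using mo unfolding A_def by (rule subsetD[OF keys_sum])
    then obtain d where "mo \<in> Poly_Mapping.keys (mshift i d (a d))" by blast
    then have "mo \<in> (\<lambda>m. m + Poly_Mapping.single i d) ` Poly_Mapping.keys (a d)"
      by (simp only: keys_mshift)
    then obtain m where m: "mo = m + Poly_Mapping.single i d" "m \<in> Poly_Mapping.keys (a d)"
      by (rule imageE)
    have km: "Poly_Mapping.keys m \<subseteq> {..<i}" using a(2) m(2) unfolding vars_in_def by blast
    have "Poly_Mapping.keys mo \<subseteq> Poly_Mapping.keys m \<union> {i}"
      unfolding m(1) keys_add_nat by auto
    then show "Poly_Mapping.keys mo \<subseteq> {..<Suc i}" using km by auto
  qed
  show "mpoly_eval A x = (\<Sum>d\<le>N. mpoly_eval (a d) x * x i ^ d)"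
    unfolding A_def eval_sum by (intro sum.cong refl eval_mshift) (rule noi)
  assume d0: "d0 \<le> N" "a d0 \<noteq> 0"
  then have "Poly_Mapping.keys (a d0) \<noteq> {}" by simp
  then obtain m0 where m0: "m0 \<in> Poly_Mapping.keys (a d0)" by blast
  have m0i: "Poly_Mapping.lookup m0 i = 0" using noi[OF m0] by (simp add: in_keys_iff)
  let ?mo = "m0 + Poly_Mapping.single i d0"
  have "Poly_Mapping.lookup A ?mo = (\<Sum>d\<le>N. Poly_Mapping.lookup (mshift i d (a d)) ?mo)"
    unfolding A_def by (simp add: lookup_sum)
  also have "\<dots> = (\<Sum>d\<le>N. if d = d0 then Poly_Mapping.lookup (a d0) m0 else 0)"
  proof (intro sum.cong refl)
    fix d assume "d \<in> {..N}"
    show "Poly_Mapping.lookup (mshift i d (a d)) ?mo = (if d = d0 then Poly_Mapping.lookup (a d0) m0 else 0)"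
    proof (cases "d = d0")
      case True then show ?thesis by (simp add: lookup_mshift lookup_add add_single_minus_d)
    next
      case False
      show ?thesis
      proof (cases "d < d0")
        case True
        let ?m = "?mo - Poly_Mapping.single i d"
        have "Poly_Mapping.lookup ?m i = d0 - d" by (simp add: lookup_minus lookup_add m0i)
        then have "i \<in> Poly_Mapping.keys ?m" using True by (simp add: in_keys_iff)
        then have "?m \<notin> Poly_Mapping.keys (a d)" using noi by blast
        then show ?thesis using False by (simp add: lookup_mshift in_keys_iff)
      next
        case False2: False
        then have "\<not> d \<le> Poly_Mapping.lookup ?mo i" using False by (simp add: lookup_add m0i)
        then show ?thesis using False by (simp add: lookup_mshift)
      qed
    qed
  qed
  also have "\<dots> = Poly_Mapping.lookup (a d0) m0" using d0 by simp
  also have "\<dots> \<noteq> 0" using m0 by (simp add: in_keys_iff)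
  finally show "A \<noteq> 0" by auto
qed

lemma Ex_rep:
  assumes K: "is_subfield K" and e: "e \<in> ExR K x i"
  shows "\<exists>a. coeffs_in K a \<and> vars_in {..<i} a \<and> mpoly_eval a x = e"
  using e
proof (induction i arbitrary: e)
  case 0
  then show ?case using K
    by (intro exI[of _ "Poly_Mapping.single 0 e"])
       (auto simp: coeffs_in_def vars_in_def eval_single0 lookup_single when_def sf_0)
next
  case (Suc i)
  then obtain q where q: "inF (ExR K x i) q" "e = poly q (x i)" by auto
  have "\<forall>d. \<exists>a. coeffs_in K a \<and> vars_in {..<i} a \<and> mpoly_eval a x = coeff q d"
    using Suc.IH q(1) unfolding inF_def by blast
  then obtain a where a: "\<And>d. coeffs_in K (a d)" "\<And>d. vars_in {..<i} (a d)"
    "\<And>d. mpoly_eval (a d) x = coeff q d" by metis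
  note B = build_mpoly[OF K a(1,2), where N="degree q"]
  show ?case
    by (rule exI[of _ "\<Sum>d\<le>degree q. mshift i d (a d)"])
       (use B(1,2) in \<open>simp add: B(3) a(3) q(2) poly_altdef mult.commute\<close>)
qed

lemma clear_denoms:
  assumes S: "is_subring S" and p: "\<forall>d. \<exists>e e'. e \<in> S \<and> e' \<in> S \<and> e' \<noteq> 0 \<and> coeff p d = e / e'"
  shows "\<exists>c\<in>S. c \<noteq> 0 \<and> (\<forall>d. c * coeff p d \<in> S)"
proof -
  obtain e e' where ee: "\<And>d. e d \<in> S" "\<And>d. e' d \<in> S" "\<And>d. e' d \<noteq> 0" "\<And>d. coeff p d = e d / e' d"
    using p by metis
  let ?c = "\<Prod>d\<le>degree p. e' d"
  have "?c \<in> S" using S ee by (intro sr_prod) auto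
  moreover have "?c \<noteq> 0" using ee(3) by simp
  moreover have "?c * coeff p d \<in> S" for d
  proof (cases "d \<le> degree p")
    case True
    then have "?c = e' d * (\<Prod>d'\<in>{..degree p} - {d}. e' d')"
      by (subst prod.remove[of _ d]) auto
    then have "?c * coeff p d = e d * (\<Prod>d'\<in>{..degree p} - {d}. e' d')"
      using ee(3,4)[of d] by (simp add: field_simps)
    then show ?thesis using S ee by (simp add: sr_mult sr_prod)
  next
    case False
    then show ?thesis using S by (simp add: coeff_eq_0 sr_0)
  qed
  ultimately show ?thesis by blast
qed

lemma FxF_subfield: "is_subfield K \<Longrightarrow> is_subfield (FxF K x i)"
  by (induction i) (auto simp: ext_subfield)

lemma K_FxF: "is_subfield K \<Longrightarrow> K \<subseteq> FxF K x i"
proof (induction i)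
  case (Suc i) then show ?case using ext_sub[OF FxF_subfield[OF Suc.prems, of x i], of "x i"] by auto
qed simp

lemma FxF_mono: "is_subfield K \<Longrightarrow> i \<le> j \<Longrightarrow> FxF K x i \<subseteq> FxF K x j"
proof (induction j)
  case (Suc j)
  show ?case
  proof (cases "i \<le> j")
    case True then show ?thesis using Suc ext_sub[OF FxF_subfield[OF Suc.prems(1), of x j], of "x j"] by auto
  next
    case False then have "i = Suc j" using Suc.prems by simp
    then show ?thesis by simp
  qed
qed simp

lemma x_in_FxF: assumes K: "is_subfield K" and i: "i' < i" shows "x i' \<in> FxF K x i"
proof -
  have "x i' \<in> FxF K x (Suc i')" using ext_alpha[OF FxF_subfield[OF K]] by simp
  then show ?thesis using FxF_mono[OF K, of "Suc i'" i x] i by auto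
qed

lemma FxF_rep:
  assumes K: "is_subfield K"
  shows "z \<in> FxF K x i \<Longrightarrow> \<exists>e e'. e \<in> ExR K x i \<and> e' \<in> ExR K x i \<and> e' \<noteq> 0 \<and> z = e / e'"
proof (induction i arbitrary: z)
  case 0
  then show ?case using K by (intro exI[of _ z] exI[of _ 1]) (auto simp: sf_1)
next
  case (Suc i)
  let ?S = "ExR K x i"
  have S: "is_subring ?S" using Ex_ring[OF K] .
  from Suc.prems obtain p q where pq: "inF (FxF K x i) p" "inF (FxF K x i) q" "poly q (x i) \<noteq> 0"
    "z = poly p (x i) / poly q (x i)" using Suc.prems unfolding FxF.simps ext_def by blast
  have "\<forall>d. \<exists>e e'. e \<in> ?S \<and> e' \<in> ?S \<and> e' \<noteq> 0 \<and> coeff p d = e / e'"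
    using Suc.IH pq(1) unfolding inF_def by blast
  from clear_denoms[OF S this] obtain c1 where c1: "c1 \<in> ?S" "c1 \<noteq> 0" "\<And>d. c1 * coeff p d \<in> ?S" by blast
  have "\<forall>d. \<exists>e e'. e \<in> ?S \<and> e' \<in> ?S \<and> e' \<noteq> 0 \<and> coeff q d = e / e'"
    using Suc.IH pq(2) unfolding inF_def by blast
  from clear_denoms[OF S this] obtain c2 where c2: "c2 \<in> ?S" "c2 \<noteq> 0" "\<And>d. c2 * coeff q d \<in> ?S" by blast
  let ?c = "c1 * c2"
  have ip: "inF ?S (smult ?c p)" unfolding inF_def
  proof
    fix d show "coeff (smult ?c p) d \<in> ?S" using sr_mult[OF S c2(1) c1(3)[of d]] by (simp add: mult_ac)
  qed
  have iq: "inF ?S (smult ?c q)" unfolding inF_def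
  proof
    fix d show "coeff (smult ?c q) d \<in> ?S" using sr_mult[OF S c1(1) c2(3)[of d]] by (simp add: mult_ac)
  qed
  show ?case
  proof (intro exI conjI)
    show "poly (smult ?c p) (x i) \<in> ExR K x (Suc i)" using ip unfolding ExR.simps by blast
    show "poly (smult ?c q) (x i) \<in> ExR K x (Suc i)" using iq unfolding ExR.simps by blast
    show "poly (smult ?c q) (x i) \<noteq> 0" using c1 c2 pq(3) by simp
    show "z = poly (smult ?c p) (x i) / poly (smult ?c q) (x i)" using c1 c2 pq(4) by simp
  qed
qed

lemma vars_mono: "vars_in V p \<Longrightarrow> V \<subseteq> W \<Longrightarrow> vars_in W p"
  unfolding vars_in_def by blast

lemma trans_x:
  assumes K: "is_subfield K" and ind: "alg_indep K n x" and i: "i < n"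
    and p: "inF (FxF K x i) p" "p \<noteq> 0"
  shows "poly p (x i) \<noteq> 0"
proof
  assume z: "poly p (x i) = 0"
  let ?S = "ExR K x i"
  have S: "is_subring ?S" using Ex_ring[OF K] .
  have "\<forall>d. \<exists>e e'. e \<in> ?S \<and> e' \<in> ?S \<and> e' \<noteq> 0 \<and> coeff p d = e / e'"
    using FxF_rep[OF K] p(1) unfolding inF_def by blast
  from clear_denoms[OF S this] obtain c where c: "c \<in> ?S" "c \<noteq> 0" "\<And>d. c * coeff p d \<in> ?S" by blast
  let ?p = "smult c p"
  have "\<forall>d. \<exists>a. coeffs_in K a \<and> vars_in {..<i} a \<and> mpoly_eval a x = coeff ?p d"
    using Ex_rep[OF K] c(3) by simp
  then obtain a where a: "\<And>d. coeffs_in K (a d)" "\<And>d. vars_in {..<i} (a d)"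
    "\<And>d. mpoly_eval (a d) x = coeff ?p d" by metis
  note B = build_mpoly[where K=K and a=a and i=i and N="degree ?p", OF K a(1) a(2)]
  let ?A = "\<Sum>d\<le>degree ?p. mshift i d (a d)"
  have "mpoly_eval ?A x = (\<Sum>d\<le>degree ?p. coeff ?p d * x i ^ d)"
    unfolding B(3) a(3) by (rule refl)
  also have "\<dots> = poly ?p (x i)" by (rule poly_altdef[symmetric])
  also have "\<dots> = 0" using z by simp
  finally have e0: "mpoly_eval ?A x = 0" .
  have "?p \<noteq> 0" using c(2) p(2) by simp
  then have "mpoly_eval (a (degree ?p)) x \<noteq> 0" using a(3) by simp
  then have "a (degree ?p) \<noteq> 0" by auto
  then have A0: "?A \<noteq> 0" using B(4) by blast
  have "vars_in {..<n} ?A" by (rule vars_mono[OF B(2)]) (use i in auto)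
  then show False using ind B(1) e0 A0 unfolding alg_indep_def by blast
qed

lemma der_x:
  assumes K: "is_subfield K" and ind: "alg_indep K n x"
  shows "i \<le> n \<Longrightarrow> \<exists>D. is_der (FxF K x i) D \<and> (\<forall>c\<in>K. D c = 0) \<and>
     (\<forall>i'<i. D (x i') = (if i' = k then 1 else 0))"
proof (induction i)
  case 0
  show ?case by (intro exI[of _ "\<lambda>_. 0"]) (simp add: is_der_def)
next
  case (Suc i)
  then obtain D where D: "is_der (FxF K x i) D" "\<forall>c\<in>K. D c = 0"
    "\<forall>i'<i. D (x i') = (if i' = k then 1 else 0)" by auto
  have F: "is_subfield (FxF K x i)" using FxF_subfield[OF K] .
  have kn: "kern (FxF K x i) D (x i) (if i = k then 1 else 0)"
    by (rule kern_trans[OF F D(1)]) (use trans_x[OF K ind] Suc.prems in auto)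
  from extend[OF F D(1) kn] obtain D' where D': "is_der (FxF K x (Suc i)) D'"
    "\<forall>c\<in>FxF K x i. D' c = D c" "D' (x i) = (if i = k then 1 else 0)" by auto
  show ?case
  proof (intro exI conjI ballI allI impI)
    show "is_der (FxF K x (Suc i)) D'" by fact
    fix c assume "c \<in> K" then show "D' c = 0" using D'(2) D(2) K_FxF[OF K, of x i] by auto
  next
    fix i' assume "i' < Suc i"
    then show "D' (x i') = (if i' = k then 1 else 0)"
      using D'(2,3) D(3) x_in_FxF[OF K] by (cases "i' = i") auto
  qed
qed

primrec Gy :: "complex set \<Rightarrow> (nat \<Rightarrow> complex) \<Rightarrow> nat \<Rightarrow> complex set" where
  "Gy F y 0 = F"
| "Gy F y (Suc l) = ext (Gy F y l) (y l)"

lemma Gy_subfield: "is_subfield F \<Longrightarrow> is_subfield (Gy F y l)"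
  by (induction l) (auto simp: ext_subfield)

lemma Gy_mono: "is_subfield F \<Longrightarrow> i \<le> j \<Longrightarrow> Gy F y i \<subseteq> Gy F y j"
proof (induction j)
  case (Suc j)
  show ?case
  proof (cases "i \<le> j")
    case True then show ?thesis using Suc ext_sub[OF Gy_subfield[OF Suc.prems(1), of y j], of "y j"] by auto
  next
    case False then have "i = Suc j" using Suc.prems by simp
    then show ?thesis by simp
  qed
qed simp

lemma y_in_Gy: assumes F: "is_subfield F" and l: "l' < l" shows "y l' \<in> Gy F y l"
proof -
  have "y l' \<in> Gy F y (Suc l')" using ext_alpha[OF Gy_subfield[OF F]] by simp
  then show ?thesis using Gy_mono[OF F, of "Suc l'" l y] l by auto
qed

lemma der_y:
  assumes F: "is_subfield F" "is_der F D"
  shows "\<exists>D'. is_der (Gy F y l) D' \<and> (\<forall>c\<in>F. D' c = D c)"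
proof (induction l)
  case 0 then show ?case using F by auto
next
  case (Suc l)
  then obtain D1 where D1: "is_der (Gy F y l) D1" "\<forall>c\<in>F. D1 c = D c" by auto
  have G: "is_subfield (Gy F y l)" using Gy_subfield[OF F(1)] .
  obtain \<beta> where "kern (Gy F y l) D1 (y l) \<beta>" using kern_exists[OF G D1(1)] by blast
  from extend[OF G D1(1) this] obtain D' where D': "is_der (Gy F y (Suc l)) D'"
    "\<forall>c\<in>Gy F y l. D' c = D1 c" by auto
  moreover have "F \<subseteq> Gy F y l" using Gy_mono[OF F(1), of 0 l y] by simp
  ultimately show ?case using D1(2) by (intro exI[of _ D']) auto
qed

lemma derivs_exist:
  fixes y :: "nat \<Rightarrow> complex" and m :: nat
  assumes K: "is_subfield K" and ind: "alg_indep K n x"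
  shows "\<exists>G D. is_subfield G \<and> is_der G D \<and> K \<subseteq> G \<and> (\<forall>c\<in>K. D c = 0) \<and>
    (\<forall>i<n. x i \<in> G \<and> D (x i) = (if i = k then 1 else 0)) \<and> (\<forall>l<m. y l \<in> G)"
proof -
  obtain D where D: "is_der (FxF K x n) D" "\<forall>c\<in>K. D c = 0"
    "\<forall>i'<n. D (x i') = (if i' = k then 1 else 0)"
    using der_x[OF K ind, of n k] by auto
  have F: "is_subfield (FxF K x n)" using FxF_subfield[OF K] .
  obtain D' where D': "is_der (Gy (FxF K x n) y m) D'" "\<forall>c\<in>FxF K x n. D' c = D c"
    using der_y[OF F D(1)] by blast
  have sub: "FxF K x n \<subseteq> Gy (FxF K x n) y m" using Gy_mono[OF F, of 0 m y] by simp
  show ?thesis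
  proof (intro exI conjI ballI allI impI)
    show "is_subfield (Gy (FxF K x n) y m)" using Gy_subfield[OF F] .
    show "is_der (Gy (FxF K x n) y m) D'" by fact
    show "K \<subseteq> Gy (FxF K x n) y m" using K_FxF[OF K] sub by blast
    fix c assume "c \<in> K" then show "D' c = 0" using D'(2) D(2) K_FxF[OF K, of x n] by auto
  next
    fix i assume i: "i < n"
    show "x i \<in> Gy (FxF K x n) y m" using x_in_FxF[OF K i] sub by blast
    show "D' (x i) = (if i = k then 1 else 0)" using x_in_FxF[OF K i] D'(2) D(3) i by auto
  next
    fix l assume "l < m" then show "y l \<in> Gy (FxF K x n) y m" using y_in_Gy[OF F] by blast
  qed
qed

lemma adjoin_subfield: "is_subfield (field_adjoin L S)"
  unfolding field_adjoin_def is_subfield_def by auto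

lemma adjoin_sub: "L \<union> S \<subseteq> field_adjoin L S"
  unfolding field_adjoin_def by auto

lemma adjoin_least: "is_subfield F \<Longrightarrow> L \<union> S \<subseteq> F \<Longrightarrow> field_adjoin L S \<subseteq> F"
  unfolding field_adjoin_def by auto

lemma consts_subfield:
  assumes G: "is_subfield G" "is_der G D"
  shows "is_subfield {c \<in> G. D c = 0}"
proof -
  { fix a assume a: "a \<in> G" "D a = 0" "a \<noteq> 0"
    have "D (a * inverse a) = a * D (inverse a) + inverse a * D a"
      using G a by (intro der_mult) (auto simp: sf_inv)
    then have "D (inverse a) = 0" using a G by (simp add: der_1) }
  then show ?thesis using G unfolding is_subfield_def
    by (auto simp: der_0 der_1 der_add der_diff der_mult sf_inv is_subfield_def)
qed

lemma det_lemma: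
  fixes JX JY M :: "nat \<Rightarrow> nat \<Rightarrow> complex" and g :: "nat \<Rightarrow> complex"
  assumes jac: "det (mat m m (\<lambda>(j, i). JX j i)) \<noteq> 0"
    and JXY: "\<And>j k. j < m \<Longrightarrow> k < m \<Longrightarrow> JX j k + (\<Sum>l<m. JY j l * M l k) = 0"
    and gM: "\<And>k. k < m \<Longrightarrow> (\<Sum>l<m. g l * M l k) = 0"
    and l0: "l0 < m"
  shows "g l0 = 0"
proof (rule ccontr)
  assume g0: "g l0 \<noteq> 0"
  let ?M = "mat m m (\<lambda>(l, k). M l k)"
  let ?JX = "mat m m (\<lambda>(j, i). JX j i)"
  let ?JY = "mat m m (\<lambda>(j, l). JY j l)"
  have sumeq: "(\<Sum>l = 0..<m. f l) = (\<Sum>l<m. f l)" for f :: "nat \<Rightarrow> complex"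
    by (rule sum.cong) auto
  have mv: "?M\<^sup>T *\<^sub>v vec m g = 0\<^sub>v m"
  proof (rule eq_vecI)
    fix k assume "k < dim_vec (0\<^sub>v m :: complex vec)"
    then have k: "k < m" by simp
    have "(?M\<^sup>T *\<^sub>v vec m g) $ k = (\<Sum>l<m. g l * M l k)"
      using k by (simp add: scalar_prod_def sumeq mult.commute)
    then show "(?M\<^sup>T *\<^sub>v vec m g) $ k = 0\<^sub>v m $ k" using gM[OF k] k by simp
  qed simp
  have nz: "vec m g \<noteq> 0\<^sub>v m"
  proof
    assume "vec m g = 0\<^sub>v m"
    then have "vec m g $ l0 = 0\<^sub>v m $ l0" by simp
    then show False using l0 g0 by simp
  qed
  have cM: "?M\<^sup>T \<in> carrier_mat m m" by simp
  have "\<exists>v. v \<in> carrier_vec m \<and> v \<noteq> 0\<^sub>v m \<and> ?M\<^sup>T *\<^sub>v v = 0\<^sub>v m"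
    using mv nz vec_carrier[of m g] by blast
  then have "det ?M\<^sup>T = 0" unfolding det_0_iff_vec_prod_zero[OF cM] .
  then have dM: "det ?M = 0" using det_transpose[of ?M m] by simp
  have eqJ: "?JX = - (?JY * ?M)"
  proof (rule eq_matI)
    fix j k assume jk: "j < dim_row (- (?JY * ?M))" "k < dim_col (- (?JY * ?M))"
    then have j: "j < m" and k: "k < m" by auto
    have "(?JY * ?M) $$ (j, k) = (\<Sum>l = 0..<m. JY j l * M l k)"
      using j k by (simp add: scalar_prod_def)
    then have e1: "(- (?JY * ?M)) $$ (j, k) = - (\<Sum>l = 0..<m. JY j l * M l k)"
      using j k by simp
    have e2: "JX j k = - (\<Sum>l<m. JY j l * M l k)"
      using JXY[OF j k] by (simp add: eq_neg_iff_add_eq_0)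
    show "?JX $$ (j, k) = (- (?JY * ?M)) $$ (j, k)" unfolding e1 using e2 j k
      by (simp add: atLeast0LessThan)
  qed auto
  have c: "?JY * ?M \<in> carrier_mat m m" using mult_carrier_mat[of ?JY m m ?M m] by simp
  have d0: "det (?JY * ?M) = 0" unfolding det_mult[of ?JY m ?M, OF mat_carrier mat_carrier] dM by simp
  have "det (- (?JY * ?M)) = 0" unfolding det_0_negate[OF c] by (rule d0)
  then have "det ?JX = 0" unfolding eqJ .
  then show False using jac by simp
qed

theorem theorem4:
  fixes K :: "complex set" and m n :: nat
    and x y :: "nat \<Rightarrow> complex"
    and f :: "nat \<Rightarrow> (nat + nat) mpoly_c"
  assumes K_field: "is_subfield K" and K_rat: "\<rat> \<subseteq> K"
    and mn: "1 \<le> m" "m < n"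
    and f_coeffs: "\<And>j. j < m \<Longrightarrow> coeffs_in K (f j)"
    and f_vars: "\<And>j. j < m \<Longrightarrow> vars_in (Inl ` {..<n} \<union> Inr ` {..<m}) (f j)"
    and f_zero: "\<And>j. j < m \<Longrightarrow> mpoly_eval (f j) (case_sum x y) = 0"
    and x_indep: "alg_indep K n x"
    and jac: "det (mat m m (\<lambda>(j, i). mpoly_eval (mpoly_pderiv (Inl i) (f j)) (case_sum x y))) \<noteq> 0"
  shows "alg_indep (field_adjoin K (x ` {m..<n})) m y"
proof -
  define L where "L = field_adjoin K (x ` {m..<n})"
  have Lsf: "is_subfield L" unfolding L_def by (rule adjoin_subfield)
  define Q where "Q k G D \<longleftrightarrow> is_subfield G \<and> is_der G D \<and> K \<subseteq> G \<and> (\<forall>c\<in>K. D c = 0) \<and>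
    (\<forall>i<n. x i \<in> G \<and> D (x i) = (if i = k then 1 else 0)) \<and> (\<forall>l<m. y l \<in> G)" for k G D
  have "\<forall>k. \<exists>G D. Q k G D" unfolding Q_def using derivs_exist[OF K_field x_indep] by blast
  then have "\<forall>k. \<exists>GD. Q k (fst GD) (snd GD)" by (metis fst_conv snd_conv)
  from choice[OF this] obtain GD where GD: "\<And>k. Q k (fst (GD k)) (snd (GD k))" by blast
  define Gs where "Gs k = fst (GD k)" for k
  define Ds where "Ds k = snd (GD k)" for k
  have G: "is_subfield (Gs k)" "is_der (Gs k) (Ds k)" "K \<subseteq> Gs k" "\<forall>c\<in>K. Ds k c = 0"
    "\<forall>i<n. x i \<in> Gs k \<and> Ds k (x i) = (if i = k then 1 else 0)" "\<forall>l<m. y l \<in> Gs k" for k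
    using GD[of k] unfolding Q_def Gs_def Ds_def by auto
  have LC: "L \<subseteq> {c \<in> Gs k. Ds k c = 0}" if k: "k < m" for k
    unfolding L_def
  proof (rule adjoin_least[OF consts_subfield[OF G(1,2)]])
    show "K \<union> x ` {m..<n} \<subseteq> {c \<in> Gs k. Ds k c = 0}"
    proof
      fix c assume "c \<in> K \<union> x ` {m..<n}"
      then show "c \<in> {c \<in> Gs k. Ds k c = 0}"
      proof
        assume "c \<in> K" then show ?thesis using G(3,4)[of k] by auto
      next
        assume "c \<in> x ` {m..<n}"
        then obtain i where i: "m \<le> i" "i < n" "c = x i" by auto
        then show ?thesis using G(5)[of k] k by auto
      qed
    qed
  qed
  show ?thesis unfolding alg_indep_def L_def[symmetric]
  proof (rule ccontr)
    assume "\<not> (\<forall>p. coeffs_in L p \<and> vars_in {..<m} p \<and> mpoly_eval p y = 0 \<longrightarrow> p = 0)"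
    then obtain P0 where "coeffs_in L P0 \<and> vars_in {..<m} P0 \<and> mpoly_eval P0 y = 0 \<and> P0 \<noteq> 0" by blast
    from ex_has_least_nat[of "\<lambda>p. coeffs_in L p \<and> vars_in {..<m} p \<and> mpoly_eval p y = 0 \<and> p \<noteq> 0", OF this, of tdeg]
    obtain P where P: "coeffs_in L P" "vars_in {..<m} P" "mpoly_eval P y = 0" "P \<noteq> 0"
      and minP: "\<And>q. coeffs_in L q \<and> vars_in {..<m} q \<and> mpoly_eval q y = 0 \<and> q \<noteq> 0 \<Longrightarrow> tdeg P \<le> tdeg q"
      by blast
    define M where "M l k = Ds k (y l)" for l k
    define g where "g l = mpoly_eval (mpoly_pderiv l P) y" for l
    define JX where "JX j i = mpoly_eval (mpoly_pderiv (Inl i) (f j)) (case_sum x y)" for j i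
    define JY where "JY j l = mpoly_eval (mpoly_pderiv (Inr l) (f j)) (case_sum x y)" for j l
    have gM: "(\<Sum>l<m. g l * M l k) = 0" if k: "k < m" for k
    proof -
      have "Ds k (mpoly_eval P y) = (\<Sum>l\<in>{..<m}. mpoly_eval (mpoly_pderiv l P) y * Ds k (y l))"
        by (rule chain_rule[OF G(1,2), where C=L]) (use LC[OF k] P G(6)[of k] in auto)
      then show ?thesis using P(3) der_0[OF G(1,2)] unfolding g_def M_def by simp
    qed
    have JXY: "JX j k + (\<Sum>l<m. JY j l * M l k) = 0" if j: "j < m" and k: "k < m" for j k
    proof -
      let ?a = "case_sum x y"
      let ?V = "Inl ` {..<n} \<union> Inr ` {..<m}"
      have "Ds k (mpoly_eval (f j) ?a) = (\<Sum>v\<in>?V. mpoly_eval (mpoly_pderiv v (f j)) ?a * Ds k (?a v))"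
        by (rule chain_rule[OF G(1,2), where C=K]) (use G(3,4)[of k] f_coeffs[OF j] f_vars[OF j] G(5,6)[of k] in auto)
      also have "\<dots> = (\<Sum>v\<in>Inl ` {..<n}. mpoly_eval (mpoly_pderiv v (f j)) ?a * Ds k (?a v)) +
          (\<Sum>v\<in>Inr ` {..<m}. mpoly_eval (mpoly_pderiv v (f j)) ?a * Ds k (?a v))"
        by (rule sum.union_disjoint) auto
      also have "(\<Sum>v\<in>Inl ` {..<n}. mpoly_eval (mpoly_pderiv v (f j)) ?a * Ds k (?a v)) =
          (\<Sum>i<n. JX j i * Ds k (x i))"
        by (subst sum.reindex) (auto simp: JX_def)
      also have "\<dots> = (\<Sum>i<n. if i = k then JX j i else 0)"
        by (intro sum.cong refl) (use G(5)[of k] in auto)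
      also have "\<dots> = JX j k" using k mn by simp
      also have "(\<Sum>v\<in>Inr ` {..<m}. mpoly_eval (mpoly_pderiv v (f j)) ?a * Ds k (?a v)) =
          (\<Sum>l<m. JY j l * M l k)"
        by (subst sum.reindex) (auto simp: JY_def M_def)
      finally show ?thesis using f_zero[OF j] der_0[OF G(1,2)] by simp
    qed
    have jac': "det (mat m m (\<lambda>(j, i). JX j i)) \<noteq> 0" using jac unfolding JX_def by simp
    have g0: "g l = 0" if "l < m" for l
      using det_lemma[OF jac' JXY gM that] by blast
    have pd0: "mpoly_pderiv l P = 0" if l: "l \<in> {..<m}" for l
    proof (rule ccontr)
      assume nz: "mpoly_pderiv l P \<noteq> 0"
      have "tdeg P \<le> tdeg (mpoly_pderiv l P)"
        using minP coeffs_pderiv[OF Lsf P(1)] vars_pderiv[OF P(2)] g0[of l] l nz unfolding g_def by auto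
      then show False using tdeg_pderiv[OF nz] by simp
    qed
    have kP: "Poly_Mapping.keys P \<subseteq> {0}" by (rule const_of_pderivs[OF P(2) pd0])
    have l0: "Poly_Mapping.lookup P 0 = 0" using eval_const[OF kP] P(3) by simp
    have "Poly_Mapping.keys P = {}"
    proof (rule equals0I)
      fix mo assume mo: "mo \<in> Poly_Mapping.keys P"
      then have "mo = 0" using kP by auto
      then show False using l0 mo by (simp add: in_keys_iff)
    qed
    then show False using P(4) by simp
  qed
qed

end
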